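(* Let $G$ be a group satisfying the property $\mathsf{FM}$ and $\nu$ a conjugation-invariant pseudo-norm on $G$. Then for any $\mathtt{g}\in A_G$ and any real numbers $\lambda_1,\lambda_2$, \[ \|\bar{\mathtt{g}}^{(\lambda_1+\lambda_2)}\cdot\mathtt{g}^{(\lambda_1)}\cdot\mathtt{g}^{(\lambda_2)}\|_\nu=0. \]
   Context: A conjugation-invariant pseudo-norm on a group $G$ is a function $\nu\colon G\to\mathbb{R}_{\ge0}$ with $\nu(1)=0$, $\nu(f)=\nu(f^{-1})$, $\nu(fg)\le\nu(f)+\nu(g)$ and $\nu(gfg^{-1})=\nu(f)$ for all $f,g\in G$. Property $\mathsf{FM}$: for a subgroup $H\le G$, let $\nu_H(f)$ be the minimal $k$ such that $f=g_1h_1g_1^{-1}\cdots g_kh_kg_k^{-1}$ ($g_i\in G,h_i\in H$), $\infty$ if none; for $K\subset G$ let $\mathrm{D}^f_H(K)$ be the set of $h_0\in G$ such that for all $g_1,\dots,g_k\in G$ there is $h\in G$ with every element of $hh_0h^{-1}K(hh_0h^{-1})^{-1}$ commuting with every element of $\bigcup_i g_iHg_i^{-1}$. $(G,H)$ satisfies $\mathsf{FM}$ if $\nu_H<\infty$ on $G$ and $\mathrm{D}^f_H(h_1Hh_1^{-1}\cup\dots\cup h_kHh_k^{-1})\ne\emptyset$ for all $h_1,\dots,h_k\in G$; $G$ satisfies $\mathsf{FM}$ if some $(G,H)$ does. $A_G=\coprod_{k\ge0}(G\times\mathbb{R})^k$, elements written as formal words $g_1^{s_1}\cdots g_k^{s_k}$,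 empty word $1$. For $\mathtt{g}=g_1^{s_1}\cdots g_k^{s_k}$: $\mathtt{g}\cdot\mathtt{h}$ is concatenation, $\bar{\mathtt{g}}=g_k^{-s_k}\cdots g_1^{-s_1}$, $\mathtt{g}^{(\lambda)}=g_1^{\lambda s_1}\cdots g_k^{\lambda s_k}$, and $\|\mathtt{g}\|_\nu=\lim_{n\to\infty}\frac1n\nu(g_1^{[s_1n]}\cdots g_k^{[s_kn]})$ ($[\cdot]$ integer part; the limit exists under $\mathsf{FM}$), $\|1\|_\nu=0$. *)

theory Defs
  imports Complex_Main "HOL-Algebra.Group"
begin

definition conj_inv_pseudo_norm :: "('a, 'b) monoid_scheme \<Rightarrow> ('a \<Rightarrow> real) \<Rightarrow> bool" where
  "conj_inv_pseudo_norm G \<nu> \<longleftrightarrow>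
     (\<forall>f\<in>carrier G. \<nu> f \<ge> 0) \<and>
     \<nu> \<one>\<^bsub>G\<^esub> = 0 \<and>
     (\<forall>f\<in>carrier G. \<nu> f = \<nu> (inv\<^bsub>G\<^esub> f)) \<and>
     (\<forall>f\<in>carrier G. \<forall>g\<in>carrier G. \<nu> (f \<otimes>\<^bsub>G\<^esub> g) \<le> \<nu> f + \<nu> g) \<and>
     (\<forall>f\<in>carrier G. \<forall>g\<in>carrier G. \<nu> (g \<otimes>\<^bsub>G\<^esub> f \<otimes>\<^bsub>G\<^esub> inv\<^bsub>G\<^esub> g) = \<nu> f)"

definition gprod :: "('a, 'b) monoid_scheme \<Rightarrow> 'a list \<Rightarrow> 'a" where
  "gprod G xs = foldr (\<lambda>x acc. x \<otimes>\<^bsub>G\<^esub> acc) xs \<one>\<^bsub>G\<^esub>"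

definition conjg :: "('a, 'b) monoid_scheme \<Rightarrow> 'a \<Rightarrow> 'a \<Rightarrow> 'a" where
  "conjg G g h = g \<otimes>\<^bsub>G\<^esub> h \<otimes>\<^bsub>G\<^esub> inv\<^bsub>G\<^esub> g"

definition conj_set :: "('a, 'b) monoid_scheme \<Rightarrow> 'a \<Rightarrow> 'a set \<Rightarrow> 'a set" where
  "conj_set G g H = conjg G g ` H"

text \<open>f is a product of k conjugates of elements of H, i.e. nu_H(f) \<le> k
  (nu_H(f) is the least such k).\<close>
definition prod_of_conjugates :: "('a, 'b) monoid_scheme \<Rightarrow> 'a set \<Rightarrow> nat \<Rightarrow> 'a \<Rightarrow> bool" where
  "prod_of_conjugates G H k f \<longleftrightarrow>
     (\<exists>gs hs. length gs = k \<and> length hs = k \<and> set gs \<subseteq> carrier G \<and> set hs \<subseteq> H \<and>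
        f = gprod G (map2 (conjg G) gs hs))"

definition nuH_finite :: "('a, 'b) monoid_scheme \<Rightarrow> 'a set \<Rightarrow> bool" where
  "nuH_finite G H \<longleftrightarrow> (\<forall>f\<in>carrier G. \<exists>k. prod_of_conjugates G H k f)"

definition Df :: "('a, 'b) monoid_scheme \<Rightarrow> 'a set \<Rightarrow> 'a set \<Rightarrow> 'a set" where
  "Df G H K = {h0 \<in> carrier G.
     \<forall>gs. set gs \<subseteq> carrier G \<longrightarrow>
       (\<exists>h\<in>carrier G.
          \<forall>x\<in>conj_set G (conjg G h h0) K. \<forall>y\<in>(\<Union>g\<in>set gs. conj_set G g H).
             x \<otimes>\<^bsub>G\<^esub> y = y \<otimes>\<^bsub>G\<^esub> x)}"

definition FM_pair :: "('a, 'b) monoid_scheme \<Rightarrow> 'a set \<Rightarrow> bool" where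
  "FM_pair G H \<longleftrightarrow> subgroup H G \<and> nuH_finite G H \<and>
     (\<forall>hs. set hs \<subseteq> carrier G \<longrightarrow> Df G H (\<Union>h\<in>set hs. conj_set G h H) \<noteq> {})"

definition FM :: "('a, 'b) monoid_scheme \<Rightarrow> bool" where
  "FM G \<longleftrightarrow> (\<exists>H. FM_pair G H)"

text \<open>A word g_1^{s_1} ... g_k^{s_k} is the list [(g_1,s_1),...,(g_k,s_k)];
  concatenation is list append, the empty word is [].\<close>
type_synonym 'a word = "('a \<times> real) list"

definition word_bar :: "'a word \<Rightarrow> 'a word" where
  "word_bar w = rev (map (\<lambda>(g, s). (g, - s)) w)"

definition word_scale :: "real \<Rightarrow> 'a word \<Rightarrow> 'a word" where
  "word_scale c w = map (\<lambda>(g, s). (g, c * s)) w"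

definition in_AG :: "('a, 'b) monoid_scheme \<Rightarrow> 'a word \<Rightarrow> bool" where
  "in_AG G w \<longleftrightarrow> (\<forall>(g, s)\<in>set w. g \<in> carrier G)"

definition word_eval :: "('a, 'b) monoid_scheme \<Rightarrow> 'a word \<Rightarrow> nat \<Rightarrow> 'a" where
  "word_eval G w n = gprod G (map (\<lambda>(g, s). g [^]\<^bsub>G\<^esub> (\<lfloor>s * real n\<rfloor>)) w)"

definition word_seq :: "('a, 'b) monoid_scheme \<Rightarrow> ('a \<Rightarrow> real) \<Rightarrow> 'a word \<Rightarrow> nat \<Rightarrow> real" where
  "word_seq G \<nu> w n = \<nu> (word_eval G w n) / real n"

definition word_norm :: "('a, 'b) monoid_scheme \<Rightarrow> ('a \<Rightarrow> real) \<Rightarrow> 'a word \<Rightarrow> real" where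
  "word_norm G \<nu> w = lim (word_seq G \<nu> w)"

end

theory Submission
  imports Defs "HOL-Algebra.Generated_Groups"
begin

context group begin

lemma cipn_facts:
  assumes "conj_inv_pseudo_norm G \<nu>"
  shows "\<And>f. f \<in> carrier G \<Longrightarrow> \<nu> f \<ge> 0"
    and "\<nu> \<one> = 0"
    and "\<And>f. f \<in> carrier G \<Longrightarrow> \<nu> (inv f) = \<nu> f"
    and "\<And>f g. f \<in> carrier G \<Longrightarrow> g \<in> carrier G \<Longrightarrow> \<nu> (f \<otimes> g) \<le> \<nu> f + \<nu> g"
    and "\<And>f g. f \<in> carrier G \<Longrightarrow> g \<in> carrier G \<Longrightarrow> \<nu> (g \<otimes> f \<otimes> inv g) = \<nu> f"
proof -
  have d: "(\<forall>f\<in>carrier G. \<nu> f \<ge> 0) \<and>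
     \<nu> \<one> = 0 \<and>
     (\<forall>f\<in>carrier G. \<nu> f = \<nu> (inv f)) \<and>
     (\<forall>f\<in>carrier G. \<forall>g\<in>carrier G. \<nu> (f \<otimes> g) \<le> \<nu> f + \<nu> g) \<and>
     (\<forall>f\<in>carrier G. \<forall>g\<in>carrier G. \<nu> (g \<otimes> f \<otimes> inv g) = \<nu> f)"
    using assms unfolding conj_inv_pseudo_norm_def .
  show "\<And>f. f \<in> carrier G \<Longrightarrow> \<nu> f \<ge> 0" using conjunct1[OF d] by (rule bspec)
  show "\<nu> \<one> = 0" using d by (rule conjE) (erule conjE)
  show "\<And>f. f \<in> carrier G \<Longrightarrow> \<nu> (inv f) = \<nu> f"
    using conjunct1[OF conjunct2[OF conjunct2[OF d]]] by (metis bspec)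
  show "\<And>f g. f \<in> carrier G \<Longrightarrow> g \<in> carrier G \<Longrightarrow> \<nu> (f \<otimes> g) \<le> \<nu> f + \<nu> g"
    using conjunct1[OF conjunct2[OF conjunct2[OF conjunct2[OF d]]]] by (metis bspec)
  show "\<And>f g. f \<in> carrier G \<Longrightarrow> g \<in> carrier G \<Longrightarrow> \<nu> (g \<otimes> f \<otimes> inv g) = \<nu> f"
    using conjunct2[OF conjunct2[OF conjunct2[OF conjunct2[OF d]]]] by (metis bspec)
qed

lemma comm_bound:
  assumes N: "conj_inv_pseudo_norm G \<nu>"
    and t: "t \<in> carrier G" and x: "x \<in> carrier G" and y: "y \<in> carrier G"
    and c: "(t \<otimes> y \<otimes> inv t) \<otimes> x = x \<otimes> (t \<otimes> y \<otimes> inv t)"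
  shows "\<nu> (x \<otimes> y \<otimes> inv x \<otimes> inv y) \<le> 4 * \<nu> t"
proof -
  define y' where "y' = t \<otimes> y \<otimes> inv t"
  have y'c: "y' \<in> carrier G" using t y by (simp add: y'_def)
  define z where "z = y \<otimes> t \<otimes> inv y \<otimes> inv t"
  have zc: "z \<in> carrier G" using t y by (simp add: z_def)
  have iy': "inv y' = t \<otimes> inv y \<otimes> inv t" using t y
    by (simp add: y'_def inv_mult_group m_assoc)
  have zy: "z = y \<otimes> inv y'" using t y by (simp add: z_def iy' m_assoc)
  have c2: "inv y' \<otimes> inv x = inv x \<otimes> inv y'"
    using c x y'c unfolding y'_def[symmetric]
    by (metis inv_mult_group)
  have "x \<otimes> z \<otimes> inv x \<otimes> inv z = x \<otimes> y \<otimes> (inv y' \<otimes> inv x) \<otimes> y' \<otimes> inv y"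
    using x y y'c by (simp add: zy inv_mult_group m_assoc)
  also have "\<dots> = x \<otimes> y \<otimes> inv x \<otimes> (inv y' \<otimes> y') \<otimes> inv y"
    using x y y'c by (simp add: c2 m_assoc)
  also have "\<dots> = x \<otimes> y \<otimes> inv x \<otimes> inv y"
    using x y y'c by simp
  finally have eq: "x \<otimes> y \<otimes> inv x \<otimes> inv y = x \<otimes> z \<otimes> inv x \<otimes> inv z" by simp
  have "\<nu> (x \<otimes> z \<otimes> inv x \<otimes> inv z) \<le> \<nu> (x \<otimes> z \<otimes> inv x) + \<nu> (inv z)"
    using cipn_facts(4)[OF N] x zc by simp
  also have "\<dots> = 2 * \<nu> z" using cipn_facts(5,3)[OF N] x zc by simp
  also have "\<nu> z \<le> \<nu> (y \<otimes> t \<otimes> inv y) + \<nu> (inv t)"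
    unfolding z_def using cipn_facts(4)[OF N] t y by simp
  also have "\<dots> = 2 * \<nu> t" using cipn_facts(5,3)[OF N] t y by simp
  finally show ?thesis using eq by simp
qed

lemma cancel_l: "x \<in> carrier G \<Longrightarrow> t \<in> carrier G \<Longrightarrow> inv t \<otimes> (t \<otimes> x) = x"
  by (simp add: m_assoc [symmetric])

lemma gprod_closed: "set xs \<subseteq> carrier G \<Longrightarrow> gprod G xs \<in> carrier G"
  by (induction xs) (auto simp: gprod_def)

lemma gprod_Cons: "gprod G (x # xs) = x \<otimes> gprod G xs"
  by (simp add: gprod_def)

lemma gprod_Nil: "gprod G [] = \<one>"
  by (simp add: gprod_def)

lemma gprod_append: "set xs \<subseteq> carrier G \<Longrightarrow> set ys \<subseteq> carrier G \<Longrightarrow>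
   gprod G (xs @ ys) = gprod G xs \<otimes> gprod G ys"
  by (induction xs) (auto simp: gprod_Cons gprod_Nil gprod_closed m_assoc)

lemma gprod_rev: "set (map f xs) \<subseteq> carrier G \<Longrightarrow>
   gprod G (rev (map f xs)) = inv (gprod G (map (\<lambda>x. inv (f x)) xs))"
proof (induction xs)
  case Nil then show ?case by (simp add: gprod_Nil)
next
  case (Cons x xs)
  have c: "set (map (\<lambda>x. inv (f x)) xs) \<subseteq> carrier G" using Cons.prems by auto
  show ?case using Cons c
    by (simp add: gprod_append gprod_Cons gprod_Nil gprod_closed inv_mult_group)
qed

lemma gprod_in_subgroup: "subgroup L G \<Longrightarrow> set xs \<subseteq> L \<Longrightarrow> gprod G xs \<in> L"
  by (induction xs) (auto simp: gprod_Cons gprod_Nil subgroup.one_closed subgroup.m_closed)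

end

context group begin

lemma main_ind:
  fixes w :: "('a \<times> 'c) list" and a b d :: "'a \<times> 'c \<Rightarrow> int"
  assumes N: "conj_inv_pseudo_norm G \<nu>" and t: "t \<in> carrier G" and L: "subgroup L G"
    and cm: "\<forall>x\<in>L. \<forall>y\<in>L. (t \<otimes> y \<otimes> inv t) \<otimes> x = x \<otimes> (t \<otimes> y \<otimes> inv t)"
  shows "fst ` set w \<subseteq> L \<Longrightarrow>
    \<nu> (gprod G (map (\<lambda>p. fst p [^] a p) w) \<otimes> gprod G (map (\<lambda>p. fst p [^] b p) w)
        \<otimes> inv (gprod G (map (\<lambda>p. fst p [^] d p) w)))
    \<le> (\<Sum>p\<leftarrow>w. 4 * \<nu> t + \<nu> (fst p [^] (a p + b p - d p)))"
proof (induction w)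
  case Nil
  then show ?case using cipn_facts(2)[OF N] by (simp add: gprod_Nil)
next
  case (Cons p w)
  define g where "g = fst p"
  have gL: "g \<in> L" using Cons.prems g_def by auto
  have gc: "g \<in> carrier G" using gL L subgroup.subset by blast
  define A where "A = gprod G (map (\<lambda>p. fst p [^] a p) w)"
  define B where "B = gprod G (map (\<lambda>p. fst p [^] b p) w)"
  define D where "D = gprod G (map (\<lambda>p. fst p [^] d p) w)"
  have wL: "fst ` set w \<subseteq> L" using Cons.prems by auto
  have AL: "A \<in> L" "B \<in> L" "D \<in> L" unfolding A_def B_def D_def
    by (auto intro!: gprod_in_subgroup[OF L] subgroup_int_pow_closed[OF L] simp: subset_iff)
      (use wL in auto)
  have Ac: "A \<in> carrier G" "B \<in> carrier G" "D \<in> carrier G"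
    using AL L subgroup.subset by blast+
  have IH: "\<nu> (A \<otimes> B \<otimes> inv D) \<le> (\<Sum>p\<leftarrow>w. 4 * \<nu> t + \<nu> (fst p [^] (a p + b p - d p)))"
    using Cons.IH[OF wL] unfolding A_def B_def D_def .
  define pa where "pa = g [^] a p"
  define pb where "pb = g [^] b p"
  define u where "u = g [^] d p"
  define r where "r = g [^] (a p + b p - d p)"
  define x where "x = g [^] (- b p)"
  have cs: "pa \<in> carrier G" "pb \<in> carrier G" "u \<in> carrier G" "r \<in> carrier G" "x \<in> carrier G"
    using gc by (auto simp: pa_def pb_def u_def r_def x_def)
  have xL: "x \<in> L" unfolding x_def by (rule subgroup_int_pow_closed[OF L gL])
  have ix: "inv x = pb" using gc by (simp add: x_def pb_def int_pow_neg)
  have key: "r \<otimes> x = inv u \<otimes> pa"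
  proof -
    have "r \<otimes> x = g [^] ((a p + b p - d p) + (- b p))" by (simp only: r_def x_def int_pow_mult[OF gc, symmetric])
    also have "\<dots> = g [^] ((- d p) + a p)" by (simp add: algebra_simps)
    also have "\<dots> = inv u \<otimes> pa" by (simp only: int_pow_mult[OF gc] int_pow_neg[OF gc] u_def pa_def)
    finally show ?thesis .
  qed
  define X where "X = pa \<otimes> A \<otimes> (pb \<otimes> B) \<otimes> inv (u \<otimes> D)"
  have Xc: "X \<in> carrier G" using cs Ac by (simp add: X_def)
  have "\<nu> X = \<nu> (inv u \<otimes> X \<otimes> inv (inv u))"
    using cipn_facts(5)[OF N Xc, of "inv u"] cs by simp
  also have "inv u \<otimes> X \<otimes> inv (inv u) = inv u \<otimes> pa \<otimes> A \<otimes> pb \<otimes> B \<otimes> inv D"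
    using cs Ac by (simp add: X_def m_assoc inv_mult_group)
  also have "\<dots> = r \<otimes> x \<otimes> A \<otimes> pb \<otimes> B \<otimes> inv D" by (simp add: key)
  also have "\<dots> = r \<otimes> (x \<otimes> A \<otimes> inv x \<otimes> inv A) \<otimes> (A \<otimes> B \<otimes> inv D)"
    using cs Ac by (simp add: ix m_assoc cancel_l)
  also have "\<nu> \<dots> \<le> \<nu> r + (\<nu> (x \<otimes> A \<otimes> inv x \<otimes> inv A) + \<nu> (A \<otimes> B \<otimes> inv D))"
    using cipn_facts(4)[OF N] cs Ac
    by (smt (verit) inv_closed m_closed)
  also have "\<nu> (x \<otimes> A \<otimes> inv x \<otimes> inv A) \<le> 4 * \<nu> t"
    using comm_bound[OF N t cs(5) Ac(1)] cm xL AL by blast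
  finally have "\<nu> X \<le> \<nu> r + 4 * \<nu> t + (\<Sum>p\<leftarrow>w. 4 * \<nu> t + \<nu> (fst p [^] (a p + b p - d p)))"
    using IH by linarith
  then show ?case
    by (simp add: X_def pa_def pb_def u_def r_def g_def A_def B_def D_def gprod_Cons)
qed

end

lemma floor3: fixes x y :: real
  shows "\<lfloor>x\<rfloor> + \<lfloor>y\<rfloor> + \<lfloor>-(x+y)\<rfloor> \<in> {-2,-1,0}"
proof -
  have a: "real_of_int \<lfloor>x\<rfloor> \<le> x" "x < real_of_int \<lfloor>x\<rfloor> + 1"
    "real_of_int \<lfloor>y\<rfloor> \<le> y" "y < real_of_int \<lfloor>y\<rfloor> + 1"
    "real_of_int \<lfloor>-(x+y)\<rfloor> \<le> -(x+y)" "-(x+y) < real_of_int \<lfloor>-(x+y)\<rfloor> + 1"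
    by linarith+
  have "real_of_int (\<lfloor>x\<rfloor> + \<lfloor>y\<rfloor> + \<lfloor>-(x+y)\<rfloor>) \<le> 0" unfolding of_int_add using a by linarith
  hence 1: "\<lfloor>x\<rfloor> + \<lfloor>y\<rfloor> + \<lfloor>-(x+y)\<rfloor> \<le> 0" by linarith
  have "real_of_int (\<lfloor>x\<rfloor> + \<lfloor>y\<rfloor> + \<lfloor>-(x+y)\<rfloor>) > -3" unfolding of_int_add using a by linarith
  hence 2: "\<lfloor>x\<rfloor> + \<lfloor>y\<rfloor> + \<lfloor>-(x+y)\<rfloor> > -3" by linarith
  show ?thesis using 1 2 by auto
qed

context group begin

lemma centr_subgroup:
  assumes "S \<subseteq> carrier G"
  shows "subgroup {z \<in> carrier G. \<forall>s\<in>S. z \<otimes> s = s \<otimes> z} G"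
proof (rule subgroupI)
  show "{z \<in> carrier G. \<forall>s\<in>S. z \<otimes> s = s \<otimes> z} \<noteq> {}" using assms by (auto intro!: exI[of _ \<one>])
next
  fix a assume a: "a \<in> {z \<in> carrier G. \<forall>s\<in>S. z \<otimes> s = s \<otimes> z}"
  show "inv a \<in> {z \<in> carrier G. \<forall>s\<in>S. z \<otimes> s = s \<otimes> z}"
  proof (safe)
    show "inv a \<in> carrier G" using a by simp
    fix s assume s: "s \<in> S"
    have sc: "s \<in> carrier G" using s assms by auto
    have ac: "a \<in> carrier G" and cm: "s \<otimes> a = a \<otimes> s" using a s by auto
    have "inv a \<otimes> s = inv a \<otimes> (s \<otimes> a) \<otimes> inv a" using ac sc by (simp add: m_assoc)
    also have "\<dots> = inv a \<otimes> (a \<otimes> s) \<otimes> inv a" by (simp only: cm)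
    also have "\<dots> = s \<otimes> inv a" using ac sc by (simp add: m_assoc[symmetric])
    finally show "inv a \<otimes> s = s \<otimes> inv a" .
  qed
next
  fix a b assume a: "a \<in> {z \<in> carrier G. \<forall>s\<in>S. z \<otimes> s = s \<otimes> z}"
    and b: "b \<in> {z \<in> carrier G. \<forall>s\<in>S. z \<otimes> s = s \<otimes> z}"
  show "a \<otimes> b \<in> {z \<in> carrier G. \<forall>s\<in>S. z \<otimes> s = s \<otimes> z}"
  proof (safe)
    show "a \<otimes> b \<in> carrier G" using a b by simp
    fix s assume s: "s \<in> S"
    have sc: "s \<in> carrier G" using s assms by auto
    have "a \<otimes> b \<otimes> s = a \<otimes> (s \<otimes> b)" using a b s sc by (simp add: m_assoc)
    also have "\<dots> = s \<otimes> a \<otimes> b" using a b s sc by (simp add: m_assoc[symmetric])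
    finally show "a \<otimes> b \<otimes> s = s \<otimes> (a \<otimes> b)" using a b sc by (simp add: m_assoc)
  qed
qed auto

lemma conj_pre_subgroup:
  assumes t: "t \<in> carrier G" and Z: "subgroup Z G"
  shows "subgroup {y \<in> carrier G. t \<otimes> y \<otimes> inv t \<in> Z} G"
proof (rule subgroupI)
  show "{y \<in> carrier G. t \<otimes> y \<otimes> inv t \<in> Z} \<noteq> {}"
    using t subgroup.one_closed[OF Z] by (auto intro!: exI[of _ \<one>])
next
  fix a assume a: "a \<in> {y \<in> carrier G. t \<otimes> y \<otimes> inv t \<in> Z}"
  have "t \<otimes> inv a \<otimes> inv t = inv (t \<otimes> a \<otimes> inv t)" using a t by (simp add: inv_mult_group m_assoc)
  thus "inv a \<in> {y \<in> carrier G. t \<otimes> y \<otimes> inv t \<in> Z}" using a subgroup.m_inv_closed[OF Z] by auto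
next
  fix a b assume a: "a \<in> {y \<in> carrier G. t \<otimes> y \<otimes> inv t \<in> Z}" and b: "b \<in> {y \<in> carrier G. t \<otimes> y \<otimes> inv t \<in> Z}"
  have "t \<otimes> (a \<otimes> b) \<otimes> inv t = (t \<otimes> a \<otimes> inv t) \<otimes> (t \<otimes> b \<otimes> inv t)" using a b t by (simp add: m_assoc cancel_l)
  thus "a \<otimes> b \<in> {y \<in> carrier G. t \<otimes> y \<otimes> inv t \<in> Z}" using a b subgroup.m_closed[OF Z] by auto
qed auto

lemma word_eval_append:
  assumes "fst ` set xs \<subseteq> carrier G" "fst ` set ys \<subseteq> carrier G"
  shows "word_eval G (xs @ ys) n = word_eval G xs n \<otimes> word_eval G ys n"
  unfolding word_eval_def map_append
  by (rule gprod_append) (use assms in force)+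

lemma pow_small:
  assumes N: "conj_inv_pseudo_norm G \<nu>" and g: "g \<in> carrier G" and s: "s \<in> {-2,-1,0::int}"
  shows "\<nu> (g [^] s) \<le> 2 * \<nu> g"
proof -
  have g0: "\<nu> g \<ge> 0" using cipn_facts(1)[OF N g] .
  consider "s = -2" | "s = -1" | "s = 0" using s by auto
  then show ?thesis
  proof cases
    case 1
    have "g [^] s = inv (g [^] ((1::int) + 1))" using g 1 by (simp add: int_pow_neg[symmetric])
    also have "\<dots> = inv (g \<otimes> g)" using g by (simp only: int_pow_mult int_pow_1)
    finally have e: "\<nu> (g [^] s) = \<nu> (g \<otimes> g)" using cipn_facts(3)[OF N] g by simp
    show ?thesis unfolding e using cipn_facts(4)[OF N g g] by simp
  next
    case 2
    then show ?thesis using g g0 cipn_facts(3)[OF N g] by (simp add: int_pow_neg)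
  next
    case 3
    then show ?thesis using g0 cipn_facts(2)[OF N] by simp
  qed
qed

lemma main_thm:
  fixes \<nu> :: "'a \<Rightarrow> real" and w :: "'a word" and l1 l2 :: real
  assumes "FM G" and "conj_inv_pseudo_norm G \<nu>" and "in_AG G w"
  shows "convergent (word_seq G \<nu> (word_bar (word_scale (l1 + l2) w) @ word_scale l1 w @ word_scale l2 w))
    \<and> word_norm G \<nu> (word_bar (word_scale (l1 + l2) w) @ word_scale l1 w @ word_scale l2 w) = 0"
proof -
  note N = assms(2)
  have wc: "fst ` set w \<subseteq> carrier G" using assms(3) unfolding in_AG_def by auto
  obtain H where FMp: "FM_pair G H" using assms(1) unfolding FM_def by blast
  have Hs: "subgroup H G" and Hfin: "nuH_finite G H"
    and HDf: "\<And>hs. set hs \<subseteq> carrier G \<Longrightarrow> Df G H (\<Union>h\<in>set hs. conj_set G h H) \<noteq> {}"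
    using FMp unfolding FM_pair_def by auto
  have "\<forall>f\<in>carrier G. \<exists>q. length (fst q) = length (snd q) \<and> set (fst q) \<subseteq> carrier G
        \<and> set (snd q) \<subseteq> H \<and> f = gprod G (map2 (conjg G) (fst q) (snd q))"
  proof
    fix f assume f: "f \<in> carrier G"
    then obtain k where "prod_of_conjugates G H k f" using Hfin unfolding nuH_finite_def by blast
    then obtain gs hs where "length gs = k" "length hs = k" "set gs \<subseteq> carrier G" "set hs \<subseteq> H"
        "f = gprod G (map2 (conjg G) gs hs)" unfolding prod_of_conjugates_def by blast
    then show "\<exists>q. length (fst q) = length (snd q) \<and> set (fst q) \<subseteq> carrier G
        \<and> set (snd q) \<subseteq> H \<and> f = gprod G (map2 (conjg G) (fst q) (snd q))"
      by (intro exI[of _ "(gs, hs)"]) simp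
  qed
  then obtain Q where Q: "\<And>f. f \<in> carrier G \<Longrightarrow> set (fst (Q f)) \<subseteq> carrier G
        \<and> set (snd (Q f)) \<subseteq> H \<and> f = gprod G (map2 (conjg G) (fst (Q f)) (snd (Q f)))"
    by (metis bchoice)
  define cs where "cs = concat (map (\<lambda>p. fst (Q (fst p))) w)"
  have csc: "set cs \<subseteq> carrier G" using Q wc by (auto simp: cs_def)
  define K where "K = (\<Union>h\<in>set cs. conj_set G h H)"
  have Kc: "K \<subseteq> carrier G" using csc subgroup.subset[OF Hs]
    by (auto simp: K_def conj_set_def conjg_def)
  obtain h0 where h0: "h0 \<in> Df G H K" using HDf[OF csc] unfolding K_def by blast
  then obtain h where hc: "h \<in> carrier G" and
    hcomm: "\<forall>x\<in>conj_set G (conjg G h h0) K. \<forall>y\<in>K. x \<otimes> y = y \<otimes> x"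
    using csc unfolding Df_def K_def by blast
  have h0c: "h0 \<in> carrier G" using h0 unfolding Df_def by auto
  define t where "t = conjg G h h0"
  have tc: "t \<in> carrier G" using hc h0c by (simp add: t_def conjg_def)
  define L where "L = generate G K"
  have Ls: "subgroup L G" unfolding L_def by (rule generate_is_subgroup[OF Kc])
  have Lc: "L \<subseteq> carrier G" using Ls subgroup.subset by blast
  define K' where "K' = conj_set G t K"
  have K'c: "K' \<subseteq> carrier G" using Kc tc by (auto simp: K'_def conj_set_def conjg_def)
  have "K \<subseteq> {z \<in> carrier G. \<forall>s\<in>K'. z \<otimes> s = s \<otimes> z}"
    using hcomm Kc unfolding K'_def t_def by auto
  hence LZ: "L \<subseteq> {z \<in> carrier G. \<forall>s\<in>K'. z \<otimes> s = s \<otimes> z}"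
    unfolding L_def by (rule generate_subgroup_incl[OF _ centr_subgroup[OF K'c]])
  have ZL: "subgroup {z \<in> carrier G. \<forall>s\<in>L. z \<otimes> s = s \<otimes> z} G" by (rule centr_subgroup[OF Lc])
  have "K \<subseteq> {y \<in> carrier G. t \<otimes> y \<otimes> inv t \<in> {z \<in> carrier G. \<forall>s\<in>L. z \<otimes> s = s \<otimes> z}}"
  proof
    fix k assume k: "k \<in> K"
    have kK': "t \<otimes> k \<otimes> inv t \<in> K'" using k by (auto simp: K'_def conj_set_def conjg_def)
    show "k \<in> {y \<in> carrier G. t \<otimes> y \<otimes> inv t \<in> {z \<in> carrier G. \<forall>s\<in>L. z \<otimes> s = s \<otimes> z}}"
      using k Kc tc LZ kK' by auto
  qed
  hence "generate G K \<subseteq> {y \<in> carrier G. t \<otimes> y \<otimes> inv t \<in> {z \<in> carrier G. \<forall>s\<in>L. z \<otimes> s = s \<otimes> z}}"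
    by (rule generate_subgroup_incl[OF _ conj_pre_subgroup[OF tc ZL]])
  hence LM: "L \<subseteq> {y \<in> carrier G. t \<otimes> y \<otimes> inv t \<in> {z \<in> carrier G. \<forall>s\<in>L. z \<otimes> s = s \<otimes> z}}"
    by (simp only: L_def[symmetric])
  have cm: "\<forall>x\<in>L. \<forall>y\<in>L. (t \<otimes> y \<otimes> inv t) \<otimes> x = x \<otimes> (t \<otimes> y \<otimes> inv t)"
    using LM by blast
  have wL: "fst ` set w \<subseteq> L"
  proof
    fix f assume f: "f \<in> fst ` set w"
    then obtain p where p: "p \<in> set w" "f = fst p" by auto
    have fc: "f \<in> carrier G" using f wc by auto
    have sub: "set (fst (Q f)) \<subseteq> set cs" using p by (auto simp: cs_def)
    have "set (map2 (conjg G) (fst (Q f)) (snd (Q f))) \<subseteq> L"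
    proof
      fix z assume "z \<in> set (map2 (conjg G) (fst (Q f)) (snd (Q f)))"
      then obtain c k where ck: "(c, k) \<in> set (zip (fst (Q f)) (snd (Q f)))" "z = conjg G c k" by auto
      have "c \<in> set cs" "k \<in> H" using ck(1) sub Q[OF fc] by (auto dest: set_zip_leftD set_zip_rightD)
      hence "z \<in> K" using ck(2) by (auto simp: K_def conj_set_def)
      thus "z \<in> L" unfolding L_def by (rule generate.incl)
    qed
    thus "f \<in> L" using Q[OF fc] gprod_in_subgroup[OF Ls] by metis
  qed
  define W where "W = word_bar (word_scale (l1 + l2) w) @ word_scale l1 w @ word_scale l2 w"
  define C where "C = (\<Sum>p\<leftarrow>w. 4 * \<nu> t + 2 * \<nu> (fst p))"
  have bound: "\<nu> (word_eval G W n) \<le> C" and pos: "\<nu> (word_eval G W n) \<ge> 0" for n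
  proof -
    define a where "a = (\<lambda>p::'a \<times> real. \<lfloor>l1 * snd p * real n\<rfloor>)"
    define b where "b = (\<lambda>p::'a \<times> real. \<lfloor>l2 * snd p * real n\<rfloor>)"
    define d where "d = (\<lambda>p::'a \<times> real. - \<lfloor>- ((l1 + l2) * snd p) * real n\<rfloor>)"
    define A where "A = gprod G (map (\<lambda>p. fst p [^] a p) w)"
    define B where "B = gprod G (map (\<lambda>p. fst p [^] b p) w)"
    define D where "D = gprod G (map (\<lambda>p. fst p [^] d p) w)"
    have Ac: "A \<in> carrier G" "B \<in> carrier G" "D \<in> carrier G"
      by (auto simp: A_def B_def D_def intro!: gprod_closed) (use wc in force)+
    have e1: "word_eval G (word_scale l1 w) n = A"
      by (simp add: word_eval_def word_scale_def A_def a_def case_prod_beta o_def)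
    have e2: "word_eval G (word_scale l2 w) n = B"
      by (simp add: word_eval_def word_scale_def B_def b_def case_prod_beta o_def)
    have e3: "word_eval G (word_bar (word_scale (l1 + l2) w)) n = inv D"
    proof -
      have "word_eval G (word_bar (word_scale (l1 + l2) w)) n
          = gprod G (rev (map (\<lambda>p. fst p [^] \<lfloor>- ((l1 + l2) * snd p) * real n\<rfloor>) w))"
        by (simp add: word_eval_def word_scale_def word_bar_def case_prod_beta rev_map o_def)
      also have "\<dots> = inv (gprod G (map (\<lambda>p. inv (fst p [^] \<lfloor>- ((l1 + l2) * snd p) * real n\<rfloor>)) w))"
        by (rule gprod_rev) (use wc in auto)
      also have "map (\<lambda>p. inv (fst p [^] \<lfloor>- ((l1 + l2) * snd p) * real n\<rfloor>)) w = map (\<lambda>p. fst p [^] d p) w"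
        using wc by (auto simp: d_def int_pow_neg)
      finally show ?thesis by (simp add: D_def)
    qed
    have wsc: "fst ` set (word_scale c w) \<subseteq> carrier G" "fst ` set (word_bar (word_scale c w)) \<subseteq> carrier G" for c
      using wc by (force simp: word_scale_def word_bar_def)+
    have wsc2: "fst ` set (word_scale l1 w @ word_scale l2 w) \<subseteq> carrier G" using wsc by auto
    have "word_eval G W n = word_eval G (word_bar (word_scale (l1 + l2) w)) n \<otimes>
        (word_eval G (word_scale l1 w) n \<otimes> word_eval G (word_scale l2 w) n)"
      unfolding W_def word_eval_append[OF wsc(2) wsc2] word_eval_append[OF wsc(1) wsc(1)] ..
    hence EW: "word_eval G W n = inv D \<otimes> A \<otimes> B"
      using e1 e2 e3 Ac by (simp add: m_assoc)
    have Ec: "inv D \<otimes> A \<otimes> B \<in> carrier G" using Ac by simp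
    have "\<nu> (inv D \<otimes> A \<otimes> B) = \<nu> (D \<otimes> (inv D \<otimes> A \<otimes> B) \<otimes> inv D)"
      using cipn_facts(5)[OF N Ec Ac(3)] by simp
    also have "D \<otimes> (inv D \<otimes> A \<otimes> B) \<otimes> inv D = A \<otimes> B \<otimes> inv D"
      using Ac by (simp add: m_assoc[symmetric])
    finally have nE: "\<nu> (word_eval G W n) = \<nu> (A \<otimes> B \<otimes> inv D)" using EW by simp
    have "\<nu> (A \<otimes> B \<otimes> inv D) \<le> (\<Sum>p\<leftarrow>w. 4 * \<nu> t + \<nu> (fst p [^] (a p + b p - d p)))"
      unfolding A_def B_def D_def by (rule main_ind[OF N tc Ls cm wL])
    also have "\<dots> \<le> C" unfolding C_def
    proof (rule sum_list_mono)
      fix p assume p: "p \<in> set w"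
      have pc: "fst p \<in> carrier G" using p wc by auto
      have "a p + b p - d p = \<lfloor>l1 * snd p * real n\<rfloor> + \<lfloor>l2 * snd p * real n\<rfloor>
          + \<lfloor>-(l1 * snd p * real n + l2 * snd p * real n)\<rfloor>"
        by (simp add: a_def b_def d_def algebra_simps)
      hence "a p + b p - d p \<in> {-2,-1,0}" using floor3 by simp
      thus "4 * \<nu> t + \<nu> (fst p [^] (a p + b p - d p)) \<le> 4 * \<nu> t + 2 * \<nu> (fst p)"
        using pow_small[OF N pc] by simp
    qed
    finally show "\<nu> (word_eval G W n) \<le> C" using nE by simp
    show "\<nu> (word_eval G W n) \<ge> 0" using cipn_facts(1)[OF N Ec] EW by simp
  qed
  have lim: "word_seq G \<nu> W \<longlonglongrightarrow> 0"
  proof (rule tendsto_sandwich[of "\<lambda>n. 0" _ _ "\<lambda>n. C / real n"])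
    show "\<forall>\<^sub>F n in sequentially. 0 \<le> word_seq G \<nu> W n"
      using pos by (auto simp: word_seq_def)
    show "\<forall>\<^sub>F n in sequentially. word_seq G \<nu> W n \<le> C / real n"
      using bound by (auto simp: word_seq_def divide_right_mono)
  qed (auto intro: lim_const_over_n)
  show ?thesis
    using lim unfolding W_def[symmetric] word_norm_def
    by (auto intro: convergentI limI)
qed

end

theorem lemma3p3:
  fixes G :: "('a, 'b) monoid_scheme" and \<nu> :: "'a \<Rightarrow> real"
    and w :: "'a word" and l1 l2 :: real
  assumes "group G" and "FM G" and "conj_inv_pseudo_norm G \<nu>" and "in_AG G w"
  shows "convergent (word_seq G \<nu> (word_bar (word_scale (l1 + l2) w) @ word_scale l1 w @ word_scale l2 w))
    \<and> word_norm G \<nu> (word_bar (word_scale (l1 + l2) w) @ word_scale l1 w @ word_scale l2 w) = 0"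
  by (rule group.main_thm[OF assms])

end
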